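(* Let $(M,\mathbf{p})$ be an oriented projective manifold of dimension $2m+1\geq3$ equipped with a parallel tractor complex structure $\mathbb{J}^A{}_B\in\Gamma(\mathcal{A})$. If its underlying vector field $k$ is a projective symmetry of $\mathbf{p}$, then $k$ is an affine symmetry of every $k$-adapted scale $\nabla\in\mathbf{p}$.
   Context: A projective structure $\mathbf{p}$ is a class of torsion-free connections with the same unparametrised geodesics. The projective tractor bundle $\mathcal{T}=(J^1\mathcal{E}(1))^*$ ($\mathcal{E}(w)$ projective density bundles) splits for $\nabla\in\mathbf{p}$ as $TM(-1)\oplus\mathcal{E}(-1)$, with normal tractor connection $\nabla^{\mathcal{T}}_a(\nu^b,\rho)=(\nabla_a\nu^b+\rho\delta^b{}_a,\nabla_a\rho-\mathsf{P}_{ab}\nu^b)$ where $\mathsf{P}$ is the projective Schouten tensor, and canonical tractor $X=(0,1)$. $\mathcal{A}$ denotes trace-free endomorphisms of $\mathcal{T}$; a parallel tractor complex structure is a $\nabla^{\mathcal{T}}$-parallel $\mathbb{J}\in\Gamma(\mathcal{A})$ with $\mathbb{J}^2=-\mathrm{id}$, and its underlying vector field $k$ is the $TM$-component of $\mathbb{J}X$. A scale is a connection in $\mathbf{p}$ preserving a nowhere vanishing density of nonzero weight; it is $k$-adapted if $\nabla_ck^c=0$. A vector field $\xi$ is a projective symmetry if its flow preserves $\mathbf{p}$ (the trace-free part of $\mathcal{L}_\xi\nabla$ vanishes), and an affine symmetry of $\nabla$ if $\mathcal{L}_\xi\nabla=0$. *)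

theory Defs
  imports "HOL-Analysis.Analysis"
begin

text \<open>Local (single chart) setting: the manifold is an open set U of real^'n,
 with coordinates x. A connection is given by its Christoffel symbols
 Chr a b c x = Gamma^a_{bc}(x), with nabla_b v^a = d_b v^a + Gamma^a_{bc} v^c.
 Tractor indices are of type 'n option: Some b is the TM(-1) slot, None the E(-1) slot.
 Density bundles are trivialised by the coordinate volume form.\<close>

definition pd :: "'n::finite \<Rightarrow> (real^'n \<Rightarrow> real) \<Rightarrow> real^'n \<Rightarrow> real" where
  "pd i f x = frechet_derivative f (at x) (axis i 1)"

fun Ck :: "nat \<Rightarrow> (real^'n::finite) set \<Rightarrow> (real^'n \<Rightarrow> real) \<Rightarrow> bool" where
  "Ck 0 U f = continuous_on U f"
| "Ck (Suc k) U f = (f differentiable_on U \<and> (\<forall>i. Ck k U (pd i f)))"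

definition smooth_fn :: "(real^'n::finite) set \<Rightarrow> (real^'n \<Rightarrow> real) \<Rightarrow> bool" where
  "smooth_fn U f = (\<forall>k. Ck k U f)"

type_synonym 'n christoffel = "'n \<Rightarrow> 'n \<Rightarrow> 'n \<Rightarrow> real^'n \<Rightarrow> real"

definition torsion_free_connection :: "(real^'n::finite) set \<Rightarrow> 'n christoffel \<Rightarrow> bool" where
  "torsion_free_connection U G =
     ((\<forall>a b c. smooth_fn U (G a b c)) \<and> (\<forall>a b c. \<forall>x\<in>U. G a b c x = G a c b x))"

text \<open>Curvature: (nabla_a nabla_b - nabla_b nabla_a) v^c = R_{ab}^c_d v^d.\<close>
definition riemann :: "'n::finite christoffel \<Rightarrow> 'n \<Rightarrow> 'n \<Rightarrow> 'n \<Rightarrow> 'n \<Rightarrow> real^'n \<Rightarrow> real" where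
  "riemann G a b c d x =
     pd a (G c b d) x - pd b (G c a d) x
     + (\<Sum>e\<in>UNIV. G c a e x * G e b d x) - (\<Sum>e\<in>UNIV. G c b e x * G e a d x)"

definition ricci :: "'n::finite christoffel \<Rightarrow> 'n \<Rightarrow> 'n \<Rightarrow> real^'n \<Rightarrow> real" where
  "ricci G b d x = (\<Sum>a\<in>UNIV. riemann G a b a d x)"

definition schouten :: "'n::finite christoffel \<Rightarrow> 'n \<Rightarrow> 'n \<Rightarrow> real^'n \<Rightarrow> real" where
  "schouten G a b x =
     (ricci G a b x + ricci G b a x) / (2 * (real CARD('n) - 1))
   + (ricci G a b x - ricci G b a x) / (2 * (real CARD('n) + 1))"

text \<open>Connection form of the normal tractor connection in the splitting of nabla:
 nabla^T_a (nu^b, rho) = (nabla_a nu^b + rho delta^b_a, nabla_a rho - P_{ab} nu^b),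
 where nu, rho have projective weight -1 (hence the trace term -Gamma^c_{ca}/(n+1)).\<close>
definition tractor_conn_form ::
  "'n::finite christoffel \<Rightarrow> 'n \<Rightarrow> 'n option \<Rightarrow> 'n option \<Rightarrow> real^'n \<Rightarrow> real" where
  "tractor_conn_form G a I K x =
     (let t = (\<Sum>c\<in>UNIV. G c c a x) / (real CARD('n) + 1) in
      (case (I, K) of
         (Some b, Some c) \<Rightarrow> G b a c x - (if b = c then t else 0)
       | (Some b, None) \<Rightarrow> (if b = a then 1 else 0)
       | (None, Some d) \<Rightarrow> - schouten G a d x
       | (None, None) \<Rightarrow> - t))"

definition tractor_deriv_endo ::
  "'n::finite christoffel \<Rightarrow> ('n option \<Rightarrow> 'n option \<Rightarrow> real^'n \<Rightarrow> real)
     \<Rightarrow> 'n \<Rightarrow> 'n option \<Rightarrow> 'n option \<Rightarrow> real^'n \<Rightarrow> real" where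
  "tractor_deriv_endo G J a I K x =
     pd a (J I K) x + (\<Sum>L\<in>UNIV. tractor_conn_form G a I L x * J L K x)
                    - (\<Sum>L\<in>UNIV. J I L x * tractor_conn_form G a L K x)"

definition parallel_tractor_complex_structure ::
  "(real^'n::finite) set \<Rightarrow> 'n christoffel \<Rightarrow> ('n option \<Rightarrow> 'n option \<Rightarrow> real^'n \<Rightarrow> real) \<Rightarrow> bool" where
  "parallel_tractor_complex_structure U G J =
     ((\<forall>I K. smooth_fn U (J I K))
    \<and> (\<forall>x\<in>U. (\<Sum>I\<in>UNIV. J I I x) = 0)
    \<and> (\<forall>x\<in>U. \<forall>I K. (\<Sum>L\<in>UNIV. J I L x * J L K x) = (if I = K then -1 else 0))
    \<and> (\<forall>x\<in>U. \<forall>a I K. tractor_deriv_endo G J a I K x = 0))"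

definition canonical_tractor :: "'n option \<Rightarrow> real" where
  "canonical_tractor I = (if I = None then 1 else 0)"

definition underlying_vf ::
  "('n::finite option \<Rightarrow> 'n option \<Rightarrow> real^'n \<Rightarrow> real) \<Rightarrow> 'n \<Rightarrow> real^'n \<Rightarrow> real" where
  "underlying_vf J b x = (\<Sum>K\<in>UNIV. J (Some b) K x * canonical_tractor K)"

definition lie_conn ::
  "'n::finite christoffel \<Rightarrow> ('n \<Rightarrow> real^'n \<Rightarrow> real) \<Rightarrow> 'n \<Rightarrow> 'n \<Rightarrow> 'n \<Rightarrow> real^'n \<Rightarrow> real" where
  "lie_conn G xi a b c x =
     pd b (pd c (xi a)) x + (\<Sum>d\<in>UNIV. xi d x * pd d (G a b c) x)
   - (\<Sum>d\<in>UNIV. G d b c x * pd d (xi a) x)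
   + (\<Sum>d\<in>UNIV. G a d c x * pd b (xi d) x) + (\<Sum>d\<in>UNIV. G a b d x * pd c (xi d) x)"

definition tracefree_part ::
  "('n::finite \<Rightarrow> 'n \<Rightarrow> 'n \<Rightarrow> real^'n \<Rightarrow> real) \<Rightarrow> 'n \<Rightarrow> 'n \<Rightarrow> 'n \<Rightarrow> real^'n \<Rightarrow> real" where
  "tracefree_part L a b c x =
     L a b c x - ((if a = b then (\<Sum>d\<in>UNIV. L d d c x) else 0)
                 + (if a = c then (\<Sum>d\<in>UNIV. L d b d x) else 0)) / (real CARD('n) + 1)"

definition projective_symmetry ::
  "(real^'n::finite) set \<Rightarrow> 'n christoffel \<Rightarrow> ('n \<Rightarrow> real^'n \<Rightarrow> real) \<Rightarrow> bool" where
  "projective_symmetry U G xi =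
     ((\<forall>a. smooth_fn U (xi a)) \<and>
      (\<forall>x\<in>U. \<forall>a b c. tracefree_part (lie_conn G xi) a b c x = 0))"

definition affine_symmetry ::
  "(real^'n::finite) set \<Rightarrow> 'n christoffel \<Rightarrow> ('n \<Rightarrow> real^'n \<Rightarrow> real) \<Rightarrow> bool" where
  "affine_symmetry U G xi =
     ((\<forall>a. smooth_fn U (xi a)) \<and> (\<forall>x\<in>U. \<forall>a b c. lie_conn G xi a b c x = 0))"

text \<open>Scale: nabla preserves a nowhere vanishing density sigma of weight w \<noteq> 0;
 a weight w density f has nabla_a f = d_a f + (w/(n+1)) Gamma^b_{ab} f.\<close>
definition is_scale :: "(real^'n::finite) set \<Rightarrow> 'n christoffel \<Rightarrow> bool" where
  "is_scale U G =
     (\<exists>(\<sigma>::real^'n \<Rightarrow> real) (w::real). w \<noteq> 0 \<and> smooth_fn U \<sigma> \<and> (\<forall>x\<in>U. \<sigma> x \<noteq> 0) \<and>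
        (\<forall>x\<in>U. \<forall>a. pd a \<sigma> x + w / (real CARD('n) + 1) * (\<Sum>b\<in>UNIV. G b a b x) * \<sigma> x = 0))"

definition k_adapted :: "(real^'n::finite) set \<Rightarrow> 'n christoffel \<Rightarrow> ('n \<Rightarrow> real^'n \<Rightarrow> real) \<Rightarrow> bool" where
  "k_adapted U G k = (\<forall>x\<in>U. (\<Sum>c\<in>UNIV. pd c (k c) x + (\<Sum>e\<in>UNIV. G c c e x * k e x)) = 0)"

end

theory Submission
  imports Defs
begin

lemma smooth_pd: "smooth_fn U f \<Longrightarrow> smooth_fn U (pd i f)"
  unfolding smooth_fn_def
proof
  fix k assume "\<forall>k. Ck k U f"
  then have "Ck (Suc k) U f" by blast
  then show "Ck k U (pd i f)" by simp
qed

lemma smooth_diff: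
  assumes "smooth_fn U f" "open U" "x \<in> U" shows "f differentiable at x"
proof -
  have "Ck (Suc 0) U f" using assms(1) unfolding smooth_fn_def by blast
  then have "f differentiable_on U" by simp
  then show ?thesis using assms(2,3) differentiable_on_eq_differentiable_at by blast
qed

lemma smooth_cont: "smooth_fn U f \<Longrightarrow> continuous_on U f"
proof -
  assume "smooth_fn U f"
  then have "Ck 0 U f" unfolding smooth_fn_def by blast
  then show ?thesis by simp
qed

lemma pd_sum:
  assumes "\<And>e. e \<in> S \<Longrightarrow> F e differentiable at x"
  shows "pd i (\<lambda>y. \<Sum>e\<in>S. F e y) x = (\<Sum>e\<in>S. pd i (F e) x)"
proof -
  have "((\<lambda>y. \<Sum>e\<in>S. F e y) has_derivative (\<lambda>h. \<Sum>e\<in>S. frechet_derivative (F e) (at x) h)) (at x)"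
    using assms by (intro has_derivative_sum) (simp add: frechet_derivative_works)
  then show ?thesis unfolding pd_def by (subst frechet_derivative_at[symmetric]) auto
qed

lemma diff_sum:
  assumes "\<And>e. e \<in> S \<Longrightarrow> F e differentiable at x"
  shows "(\<lambda>y. \<Sum>e\<in>S. F e y) differentiable at x"
proof -
  have "((\<lambda>y. \<Sum>e\<in>S. F e y) has_derivative (\<lambda>h. \<Sum>e\<in>S. frechet_derivative (F e) (at x) h)) (at x)"
    using assms by (intro has_derivative_sum) (simp add: frechet_derivative_works)
  then show ?thesis unfolding differentiable_def by blast
qed

lemma pd_mult:
  assumes "f differentiable at x" "g differentiable at x"
  shows "pd i (\<lambda>y. f y * g y) x = pd i f x * g x + f x * pd i g x"
proof -
  have "((\<lambda>y. f y * g y) has_derivative (\<lambda>h. f x * frechet_derivative g (at x) h + frechet_derivative f (at x) h * g x)) (at x)"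
    using assms by (intro has_derivative_mult) (simp_all add: frechet_derivative_works)
  then show ?thesis unfolding pd_def by (subst frechet_derivative_at[symmetric]) (auto simp: algebra_simps)
qed

lemma pd_local:
  assumes "open V" "x \<in> V" "f differentiable at x" "\<And>y. y \<in> V \<Longrightarrow> f y = g y"
  shows "pd i f x = pd i g x"
proof -
  have "frechet_derivative f (at x) = frechet_derivative g (at x)"
    by (rule frechet_derivative_transform_within_open[OF assms(3,1,2)]) (rule assms(4))
  then show ?thesis unfolding pd_def by simp
qed

lemma pd_add:
  assumes "f differentiable at x" "g differentiable at x"
  shows "pd i (\<lambda>y. f y + g y) x = pd i f x + pd i g x"
proof -
  have "((\<lambda>y. f y + g y) has_derivative (\<lambda>h. frechet_derivative f (at x) h + frechet_derivative g (at x) h)) (at x)"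
    using assms by (intro has_derivative_add) (simp_all add: frechet_derivative_works)
  then show ?thesis unfolding pd_def by (subst frechet_derivative_at[symmetric]) auto
qed

lemma pd_const: "pd i (\<lambda>y. c) x = 0"
  unfolding pd_def by simp

lemma line_deriv:
  fixes f :: "real^'n::finite \<Rightarrow> real"
  assumes "f differentiable at (y + s *\<^sub>R axis i 1)"
  shows "((\<lambda>s. f (y + s *\<^sub>R axis i 1)) has_real_derivative pd i f (y + s *\<^sub>R axis i 1)) (at s)"
proof -
  let ?p = "y + s *\<^sub>R axis i 1"
  have g: "((\<lambda>s. y + s *\<^sub>R axis i (1::real)) has_derivative (\<lambda>h. h *\<^sub>R axis i 1)) (at s)"
    by (auto intro!: derivative_eq_intros)
  have f: "(f has_derivative frechet_derivative f (at ?p)) (at ?p)"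
    using assms frechet_derivative_works by blast
  have "((\<lambda>s. f (y + s *\<^sub>R axis i 1)) has_derivative (\<lambda>h. frechet_derivative f (at ?p) (h *\<^sub>R axis i 1))) (at s)"
    using diff_chain_at[OF g f] by (simp add: o_def)
  moreover have "linear (frechet_derivative f (at ?p))"
    using f has_derivative_linear by blast
  ultimately show ?thesis unfolding pd_def
    by (intro has_derivative_imp_has_field_derivative) (auto simp: linear_scale mult.commute)
qed

lemma clairaut:
  fixes f :: "real^'n::finite \<Rightarrow> real"
  assumes U: "open U" "x \<in> U"
    and df: "\<And>p. p \<in> U \<Longrightarrow> f differentiable at p"
    and di: "\<And>p. p \<in> U \<Longrightarrow> pd i f differentiable at p"
    and dj: "\<And>p. p \<in> U \<Longrightarrow> pd j f differentiable at p"
    and cA: "continuous_on U (pd j (pd i f))"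
    and cB: "continuous_on U (pd i (pd j f))"
  shows "pd j (pd i f) x = pd i (pd j f) x"
proof (rule ccontr)
  let ?A = "pd j (pd i f)" and ?B = "pd i (pd j f)"
  let ?u = "axis i (1::real)" and ?v = "axis j (1::real)"
  assume ne: "?A x \<noteq> ?B x"
  define \<epsilon> where "\<epsilon> = \<bar>?A x - ?B x\<bar> / 3"
  have ep: "\<epsilon> > 0" using ne by (simp add: \<epsilon>_def)
  have iA: "isCont ?A x" using cA U continuous_on_eq_continuous_at by blast
  have iB: "isCont ?B x" using cB U continuous_on_eq_continuous_at by blast
  have "\<forall>e>0. \<exists>d>0. \<forall>p. dist p x < d \<longrightarrow> dist (?A p) (?A x) < e" using iA unfolding continuous_at_eps_delta .
  then obtain r1 where r1a: "r1 > 0" and r1b: "\<forall>p. dist p x < r1 \<longrightarrow> dist (?A p) (?A x) < \<epsilon>" using ep by blast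
  have "\<forall>e>0. \<exists>d>0. \<forall>p. dist p x < d \<longrightarrow> dist (?B p) (?B x) < e" using iB unfolding continuous_at_eps_delta .
  then obtain r2 where r2a: "r2 > 0" and r2b: "\<forall>p. dist p x < r2 \<longrightarrow> dist (?B p) (?B x) < \<epsilon>" using ep by blast
  have r1: "r1 > 0" "\<And>p. dist p x < r1 \<Longrightarrow> \<bar>?A p - ?A x\<bar> < \<epsilon>" using r1a r1b by (auto simp: dist_real_def)
  have r2: "r2 > 0" "\<And>p. dist p x < r2 \<Longrightarrow> \<bar>?B p - ?B x\<bar> < \<epsilon>" using r2a r2b by (auto simp: dist_real_def)
  obtain r3 where r3: "r3 > 0" "ball x r3 \<subseteq> U" using U open_contains_ball by blast
  define h where "h = min r1 (min r2 r3) / 3"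
  have h: "h > 0" "2 * h < r1" "2 * h < r2" "2 * h < r3" using r1 r2 r3 by (auto simp: h_def)
  have inb: "dist (x + s *\<^sub>R ?u + t *\<^sub>R ?v) x \<le> 2 * h" if "0 \<le> s" "s \<le> h" "0 \<le> t" "t \<le> h" for s t
  proof -
    have "dist (x + s *\<^sub>R ?u + t *\<^sub>R ?v) x = norm (s *\<^sub>R ?u + t *\<^sub>R ?v)" by (simp add: dist_norm)
    also have "\<dots> \<le> norm (s *\<^sub>R ?u) + norm (t *\<^sub>R ?v)" by (rule norm_triangle_ineq)
    also have "\<dots> \<le> 2 * h" using that by simp
    finally show ?thesis .
  qed
  have inU: "x + s *\<^sub>R ?u + t *\<^sub>R ?v \<in> U" if "0 \<le> s" "s \<le> h" "0 \<le> t" "t \<le> h" for s t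
    using inb[OF that] h r3 by (auto simp: dist_commute)
  define \<Delta> where "\<Delta> = f (x + h *\<^sub>R ?u + h *\<^sub>R ?v) - f (x + h *\<^sub>R ?u) - f (x + h *\<^sub>R ?v) + f x"
  obtain \<xi> where xi: "0 < \<xi>" "\<xi> < h" and
    xe: "(f (x + h *\<^sub>R ?v + h *\<^sub>R ?u) - f (x + h *\<^sub>R ?u)) - (f (x + h *\<^sub>R ?v + 0 *\<^sub>R ?u) - f (x + 0 *\<^sub>R ?u))
       = (h - 0) * (pd i f (x + h *\<^sub>R ?v + \<xi> *\<^sub>R ?u) - pd i f (x + \<xi> *\<^sub>R ?u))"
  proof -
    have "\<exists>z. 0 < z \<and> z < h \<and> (f (x + h *\<^sub>R ?v + h *\<^sub>R ?u) - f (x + h *\<^sub>R ?u)) - (f (x + h *\<^sub>R ?v + 0 *\<^sub>R ?u) - f (x + 0 *\<^sub>R ?u))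
       = (h - 0) * (pd i f (x + h *\<^sub>R ?v + z *\<^sub>R ?u) - pd i f (x + z *\<^sub>R ?u))"
    proof (rule MVT2[where f = "\<lambda>s. f (x + h *\<^sub>R ?v + s *\<^sub>R ?u) - f (x + s *\<^sub>R ?u)"])
      show "0 < h" using h by simp
      fix s assume s: "0 \<le> s" "s \<le> h"
      have eq: "x + h *\<^sub>R ?v + s *\<^sub>R ?u = x + s *\<^sub>R ?u + h *\<^sub>R ?v" by (simp add: algebra_simps)
      have "x + s *\<^sub>R ?u + h *\<^sub>R ?v \<in> U" using inU[OF s, of h] h by simp
      then have p1: "x + h *\<^sub>R ?v + s *\<^sub>R ?u \<in> U" unfolding eq .
      have p2: "x + s *\<^sub>R ?u \<in> U" using inU[OF s, of 0] h by simp
      show "((\<lambda>s. f (x + h *\<^sub>R ?v + s *\<^sub>R ?u) - f (x + s *\<^sub>R ?u)) has_real_derivative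
              pd i f (x + h *\<^sub>R ?v + s *\<^sub>R ?u) - pd i f (x + s *\<^sub>R ?u)) (at s)"
        by (rule DERIV_diff[OF line_deriv[OF df[OF p1]] line_deriv[OF df[OF p2]]])
    qed
    then show ?thesis using that by blast
  qed
  obtain \<eta> where eta: "0 < \<eta>" "\<eta> < h" and
    ee: "pd i f (x + \<xi> *\<^sub>R ?u + h *\<^sub>R ?v) - pd i f (x + \<xi> *\<^sub>R ?u + 0 *\<^sub>R ?v)
       = (h - 0) * ?A (x + \<xi> *\<^sub>R ?u + \<eta> *\<^sub>R ?v)"
  proof -
    have "\<exists>z. 0 < z \<and> z < h \<and> pd i f (x + \<xi> *\<^sub>R ?u + h *\<^sub>R ?v) - pd i f (x + \<xi> *\<^sub>R ?u + 0 *\<^sub>R ?v)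
       = (h - 0) * ?A (x + \<xi> *\<^sub>R ?u + z *\<^sub>R ?v)"
    proof (rule MVT2[where f = "\<lambda>t. pd i f (x + \<xi> *\<^sub>R ?u + t *\<^sub>R ?v)"])
      show "0 < h" using h by simp
      fix t assume t: "0 \<le> t" "t \<le> h"
      have p1: "x + \<xi> *\<^sub>R ?u + t *\<^sub>R ?v \<in> U" using inU[of \<xi> t] xi t by simp
      show "((\<lambda>t. pd i f (x + \<xi> *\<^sub>R ?u + t *\<^sub>R ?v)) has_real_derivative ?A (x + \<xi> *\<^sub>R ?u + t *\<^sub>R ?v)) (at t)"
        by (intro line_deriv di p1)
    qed
    then show ?thesis using that by blast
  qed
  have D1: "\<Delta> = h * h * ?A (x + \<xi> *\<^sub>R ?u + \<eta> *\<^sub>R ?v)"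
  proof -
    have "\<Delta> = h * (pd i f (x + h *\<^sub>R ?v + \<xi> *\<^sub>R ?u) - pd i f (x + \<xi> *\<^sub>R ?u))"
    proof -
      have pc: "x + h *\<^sub>R ?v + h *\<^sub>R ?u = x + h *\<^sub>R ?u + h *\<^sub>R ?v" by (simp add: algebra_simps)
      have "f (x + h *\<^sub>R ?v + h *\<^sub>R ?u) - f (x + h *\<^sub>R ?u) - (f (x + h *\<^sub>R ?v) - f x)
         = h * (pd i f (x + h *\<^sub>R ?v + \<xi> *\<^sub>R ?u) - pd i f (x + \<xi> *\<^sub>R ?u))" using xe by simp
      then show ?thesis unfolding \<Delta>_def pc by linarith
    qed
    also have "\<dots> = h * (h * ?A (x + \<xi> *\<^sub>R ?u + \<eta> *\<^sub>R ?v))"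
    proof -
      have pc: "x + h *\<^sub>R ?v + \<xi> *\<^sub>R ?u = x + \<xi> *\<^sub>R ?u + h *\<^sub>R ?v" by (simp add: algebra_simps)
      have "pd i f (x + \<xi> *\<^sub>R ?u + h *\<^sub>R ?v) - pd i f (x + \<xi> *\<^sub>R ?u) = h * ?A (x + \<xi> *\<^sub>R ?u + \<eta> *\<^sub>R ?v)"
        using ee by simp
      then show ?thesis unfolding pc by simp
    qed
    finally show ?thesis by simp
  qed
  obtain \<xi>' where xi': "0 < \<xi>'" "\<xi>' < h" and
    xe': "(f (x + h *\<^sub>R ?u + h *\<^sub>R ?v) - f (x + h *\<^sub>R ?v)) - (f (x + h *\<^sub>R ?u + 0 *\<^sub>R ?v) - f (x + 0 *\<^sub>R ?v))
       = (h - 0) * (pd j f (x + h *\<^sub>R ?u + \<xi>' *\<^sub>R ?v) - pd j f (x + \<xi>' *\<^sub>R ?v))"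
  proof -
    have "\<exists>z. 0 < z \<and> z < h \<and> (f (x + h *\<^sub>R ?u + h *\<^sub>R ?v) - f (x + h *\<^sub>R ?v)) - (f (x + h *\<^sub>R ?u + 0 *\<^sub>R ?v) - f (x + 0 *\<^sub>R ?v))
       = (h - 0) * (pd j f (x + h *\<^sub>R ?u + z *\<^sub>R ?v) - pd j f (x + z *\<^sub>R ?v))"
    proof (rule MVT2[where f = "\<lambda>t. f (x + h *\<^sub>R ?u + t *\<^sub>R ?v) - f (x + t *\<^sub>R ?v)"])
      show "0 < h" using h by simp
      fix t assume t: "0 \<le> t" "t \<le> h"
      have p1: "x + h *\<^sub>R ?u + t *\<^sub>R ?v \<in> U" using inU[OF _ _ t, of h] h by simp
      have p2: "x + t *\<^sub>R ?v \<in> U" using inU[OF _ _ t, of 0] h by simp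
      show "((\<lambda>t. f (x + h *\<^sub>R ?u + t *\<^sub>R ?v) - f (x + t *\<^sub>R ?v)) has_real_derivative
              pd j f (x + h *\<^sub>R ?u + t *\<^sub>R ?v) - pd j f (x + t *\<^sub>R ?v)) (at t)"
        by (rule DERIV_diff[OF line_deriv[OF df[OF p1]] line_deriv[OF df[OF p2]]])
    qed
    then show ?thesis using that by blast
  qed
  obtain \<eta>' where eta': "0 < \<eta>'" "\<eta>' < h" and
    ee': "pd j f (x + \<xi>' *\<^sub>R ?v + h *\<^sub>R ?u) - pd j f (x + \<xi>' *\<^sub>R ?v + 0 *\<^sub>R ?u)
       = (h - 0) * ?B (x + \<xi>' *\<^sub>R ?v + \<eta>' *\<^sub>R ?u)"
  proof -
    have "\<exists>z. 0 < z \<and> z < h \<and> pd j f (x + \<xi>' *\<^sub>R ?v + h *\<^sub>R ?u) - pd j f (x + \<xi>' *\<^sub>R ?v + 0 *\<^sub>R ?u)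
       = (h - 0) * ?B (x + \<xi>' *\<^sub>R ?v + z *\<^sub>R ?u)"
    proof (rule MVT2[where f = "\<lambda>s. pd j f (x + \<xi>' *\<^sub>R ?v + s *\<^sub>R ?u)"])
      show "0 < h" using h by simp
      fix s assume s: "0 \<le> s" "s \<le> h"
      have eq: "x + \<xi>' *\<^sub>R ?v + s *\<^sub>R ?u = x + s *\<^sub>R ?u + \<xi>' *\<^sub>R ?v" by (simp add: algebra_simps)
      have "x + s *\<^sub>R ?u + \<xi>' *\<^sub>R ?v \<in> U" using inU[OF s, of \<xi>'] xi' by simp
      then have p1: "x + \<xi>' *\<^sub>R ?v + s *\<^sub>R ?u \<in> U" unfolding eq .
      show "((\<lambda>s. pd j f (x + \<xi>' *\<^sub>R ?v + s *\<^sub>R ?u)) has_real_derivative ?B (x + \<xi>' *\<^sub>R ?v + s *\<^sub>R ?u)) (at s)"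
        by (intro line_deriv dj p1)
    qed
    then show ?thesis using that by blast
  qed
  have D2: "\<Delta> = h * h * ?B (x + \<xi>' *\<^sub>R ?v + \<eta>' *\<^sub>R ?u)"
  proof -
    have "\<Delta> = h * (pd j f (x + h *\<^sub>R ?u + \<xi>' *\<^sub>R ?v) - pd j f (x + \<xi>' *\<^sub>R ?v))"
    proof -
      have "f (x + h *\<^sub>R ?u + h *\<^sub>R ?v) - f (x + h *\<^sub>R ?v) - (f (x + h *\<^sub>R ?u) - f x)
         = h * (pd j f (x + h *\<^sub>R ?u + \<xi>' *\<^sub>R ?v) - pd j f (x + \<xi>' *\<^sub>R ?v))" using xe' by simp
      then show ?thesis unfolding \<Delta>_def by linarith
    qed
    also have "\<dots> = h * (h * ?B (x + \<xi>' *\<^sub>R ?v + \<eta>' *\<^sub>R ?u))"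
    proof -
      have pc: "x + h *\<^sub>R ?u + \<xi>' *\<^sub>R ?v = x + \<xi>' *\<^sub>R ?v + h *\<^sub>R ?u" by (simp add: algebra_simps)
      have "pd j f (x + \<xi>' *\<^sub>R ?v + h *\<^sub>R ?u) - pd j f (x + \<xi>' *\<^sub>R ?v) = h * ?B (x + \<xi>' *\<^sub>R ?v + \<eta>' *\<^sub>R ?u)"
        using ee' by simp
      then show ?thesis unfolding pc by simp
    qed
    finally show ?thesis by simp
  qed
  have AB: "?A (x + \<xi> *\<^sub>R ?u + \<eta> *\<^sub>R ?v) = ?B (x + \<xi>' *\<^sub>R ?v + \<eta>' *\<^sub>R ?u)"
    using D1 D2 h by simp
  have "dist (x + \<xi> *\<^sub>R ?u + \<eta> *\<^sub>R ?v) x < r1" using inb[of \<xi> \<eta>] xi eta h by simp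
  then have a: "\<bar>?A (x + \<xi> *\<^sub>R ?u + \<eta> *\<^sub>R ?v) - ?A x\<bar> < \<epsilon>" using r1 by blast
  have pc4: "x + \<eta>' *\<^sub>R ?u + \<xi>' *\<^sub>R ?v = x + \<xi>' *\<^sub>R ?v + \<eta>' *\<^sub>R ?u" by (simp add: algebra_simps)
  have "dist (x + \<eta>' *\<^sub>R ?u + \<xi>' *\<^sub>R ?v) x < r2" using inb[of \<eta>' \<xi>'] xi' eta' h by simp
  then have "dist (x + \<xi>' *\<^sub>R ?v + \<eta>' *\<^sub>R ?u) x < r2" unfolding pc4 .
  then have b: "\<bar>?B (x + \<xi>' *\<^sub>R ?v + \<eta>' *\<^sub>R ?u) - ?B x\<bar> < \<epsilon>" using r2 by blast
  have gen: "\<And>A1 B1 Ax Bx (e::real). \<bar>A1 - Ax\<bar> < e \<Longrightarrow> \<bar>B1 - Bx\<bar> < e \<Longrightarrow> A1 = B1 \<Longrightarrow> e = \<bar>Ax - Bx\<bar> / 3 \<Longrightarrow> False"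
    by (auto simp: abs_real_def split: if_splits)
  show False using gen[OF a b AB \<epsilon>_def] .
qed


theorem proposition5p27:
  fixes U :: "(real^'n::finite) set" and m :: nat
    and G :: "'n christoffel"
    and J :: "'n option \<Rightarrow> 'n option \<Rightarrow> real^'n \<Rightarrow> real"
  assumes "open U"
    and "m \<ge> 1" and "CARD('n) = 2 * m + 1"
    and "torsion_free_connection U G"
    and "parallel_tractor_complex_structure U G J"
    and "projective_symmetry U G (underlying_vf J)"
    and "is_scale U G"
    and "k_adapted U G (underlying_vf J)"
  shows "affine_symmetry U G (underlying_vf J)"
proof -
  define k where "k = underlying_vf J"
  note U = assms(1)
  have Gs: "\<And>a b c. smooth_fn U (G a b c)" and Gsym: "\<And>a b c y. y \<in> U \<Longrightarrow> G a b c y = G a c b y"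
    using assms(4) unfolding torsion_free_connection_def by auto
  have ks: "\<And>a. smooth_fn U (k a)" and tfz: "\<And>y a b c. y \<in> U \<Longrightarrow> tracefree_part (lie_conn G k) a b c y = 0"
    using assms(6) unfolding projective_symmetry_def k_def by auto
  obtain \<sigma> w where w: "w \<noteq> 0" and \<sigma>s: "smooth_fn U \<sigma>" and \<sigma>nz: "\<And>y. y \<in> U \<Longrightarrow> \<sigma> y \<noteq> 0"
    and \<sigma>eq0: "\<And>y a. y \<in> U \<Longrightarrow> pd a \<sigma> y + w / (real CARD('n) + 1) * (\<Sum>b\<in>UNIV. G b a b y) * \<sigma> y = 0"
    using assms(7) unfolding is_scale_def by blast
  have adp: "\<And>y. y \<in> U \<Longrightarrow> (\<Sum>c\<in>UNIV. pd c (k c) y + (\<Sum>e\<in>UNIV. G c c e y * k e y)) = 0"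
    using assms(8) unfolding k_adapted_def k_def by auto
  define Gv where "Gv = (\<lambda>e y. \<Sum>d\<in>UNIV. G d e d y)"
  define cc where "cc = w / (real CARD('n) + 1)"
  have cc: "cc \<noteq> 0" using w by (simp add: cc_def add_pos_nonneg)
  have \<sigma>eq: "pd a \<sigma> y = ((- cc) * Gv a y) * \<sigma> y" if "y \<in> U" for y a
  proof -
    have e: "pd a \<sigma> y + cc * Gv a y * \<sigma> y = 0" using \<sigma>eq0[OF that] unfolding cc_def Gv_def .
    then have "pd a \<sigma> y = - (cc * Gv a y * \<sigma> y)" by (simp add: eq_neg_iff_add_eq_0)
    then show ?thesis by simp
  qed
  show ?thesis
    unfolding affine_symmetry_def k_def[symmetric]
  proof (intro conjI ballI allI)
    fix a show "smooth_fn U (k a)" by (rule ks)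
  next
    fix x a b c assume x: "x \<in> U"
    have dG: "\<And>a b c. G a b c differentiable at x" using Gs smooth_diff U x by blast
    have dk: "\<And>a. k a differentiable at x" using ks smooth_diff U x by blast
    have dpk: "\<And>a b. pd b (k a) differentiable at x" using ks smooth_pd smooth_diff U x by blast
    have dGv: "\<And>e. Gv e differentiable at x" unfolding Gv_def by (intro diff_sum dG)
    have d\<sigma>: "\<sigma> differentiable at x" using \<sigma>s smooth_diff U x by blast
    have kcl: "\<And>a i j. pd j (pd i (k a)) x = pd i (pd j (k a)) x"
      by (rule clairaut[OF U x smooth_diff[OF ks U] smooth_diff[OF smooth_pd[OF ks] U] smooth_diff[OF smooth_pd[OF ks] U]
              smooth_cont[OF smooth_pd[OF smooth_pd[OF ks]]] smooth_cont[OF smooth_pd[OF smooth_pd[OF ks]]]])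
    have \<sigma>cl: "\<And>i j. pd j (pd i \<sigma>) x = pd i (pd j \<sigma>) x"
      by (rule clairaut[OF U x smooth_diff[OF \<sigma>s U] smooth_diff[OF smooth_pd[OF \<sigma>s] U] smooth_diff[OF smooth_pd[OF \<sigma>s] U]
              smooth_cont[OF smooth_pd[OF smooth_pd[OF \<sigma>s]]] smooth_cont[OF smooth_pd[OF smooth_pd[OF \<sigma>s]]]])
    have curl: "\<And>e a. pd e (Gv a) x = pd a (Gv e) x"
    proof -
      fix e a
      have h1: "\<And>e a. pd e (pd a \<sigma>) x = ((- cc) * pd e (Gv a) x) * \<sigma> x + ((- cc) * Gv a x) * (((- cc) * Gv e x) * \<sigma> x)"
      proof -
        fix e a
        have "pd e (pd a \<sigma>) x = pd e (\<lambda>y. ((- cc) * Gv a y) * \<sigma> y) x"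
          by (rule pd_local[OF U x smooth_diff[OF smooth_pd[OF \<sigma>s] U x]]) (simp add: \<sigma>eq)
        also have "\<dots> = pd e (\<lambda>y. (- cc) * Gv a y) x * \<sigma> x + ((- cc) * Gv a x) * pd e \<sigma> x"
          by (rule pd_mult[OF differentiable_mult[OF differentiable_const dGv] d\<sigma>])
        also have "pd e (\<lambda>y. (- cc) * Gv a y) x = (- cc) * pd e (Gv a) x"
          using pd_mult[of "\<lambda>y. - cc" x "Gv a" e] dGv by (simp add: pd_const)
        finally show "pd e (pd a \<sigma>) x = ((- cc) * pd e (Gv a) x) * \<sigma> x + ((- cc) * Gv a x) * (((- cc) * Gv e x) * \<sigma> x)"
          using \<sigma>eq[OF x] by simp
      qed
      have "((- cc) * \<sigma> x) * (pd e (Gv a) x - pd a (Gv e) x) = pd e (pd a \<sigma>) x - pd a (pd e \<sigma>) x"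
        unfolding h1[of e a] h1[of a e] by (simp add: algebra_simps)
      then have "((- cc) * \<sigma> x) * (pd e (Gv a) x - pd a (Gv e) x) = 0"
        using \<sigma>cl[of a e] by simp
      then show "pd e (Gv a) x = pd a (Gv e) x" using cc \<sigma>nz[OF x] by simp
    qed
    define D2 where "D2 = (\<lambda>y. (\<Sum>c\<in>UNIV. pd c (k c) y) + (\<Sum>e\<in>UNIV. Gv e y * k e y))"
    have D2z: "D2 y = 0" if y: "y \<in> U" for y
    proof -
      have "(\<Sum>e\<in>UNIV. Gv e y * k e y) = (\<Sum>e\<in>UNIV. \<Sum>c\<in>UNIV. G c e c y * k e y)"
        by (simp add: Gv_def sum_distrib_right)
      also have "\<dots> = (\<Sum>c\<in>UNIV. \<Sum>e\<in>UNIV. G c e c y * k e y)" by (rule sum.swap)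
      also have "\<dots> = (\<Sum>c\<in>UNIV. \<Sum>e\<in>UNIV. G c c e y * k e y)"
        by (rule sum.cong[OF refl], rule sum.cong[OF refl]) (subst Gsym[OF y], rule refl)
      finally show ?thesis using adp[OF y] by (simp add: D2_def sum.distrib)
    qed
    define SS where "SS = (\<lambda>b. (\<Sum>d\<in>UNIV. pd b (pd d (k d)) x) + (\<Sum>e\<in>UNIV. k e x * pd e (Gv b) x) + (\<Sum>e\<in>UNIV. Gv e x * pd b (k e) x))"
    have SS0: "SS b' = 0" for b'
    proof -
      have "pd b' (\<lambda>y. 0) x = pd b' D2 x"
        by (rule pd_local[OF U x differentiable_const]) (simp add: D2z)
      then have pD: "pd b' D2 x = 0" by (simp add: pd_const)
      have "pd b' D2 x = pd b' (\<lambda>y. \<Sum>c\<in>UNIV. pd c (k c) y) x + pd b' (\<lambda>y. \<Sum>e\<in>UNIV. Gv e y * k e y) x"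
        unfolding D2_def by (rule pd_add[OF diff_sum[OF dpk] diff_sum[OF differentiable_mult[OF dGv dk]]])
      also have "pd b' (\<lambda>y. \<Sum>c\<in>UNIV. pd c (k c) y) x = (\<Sum>c\<in>UNIV. pd b' (pd c (k c)) x)"
        by (rule pd_sum) (rule dpk)
      also have "pd b' (\<lambda>y. \<Sum>e\<in>UNIV. Gv e y * k e y) x = (\<Sum>e\<in>UNIV. pd b' (\<lambda>y. Gv e y * k e y) x)"
        by (rule pd_sum[OF differentiable_mult[OF dGv dk]])
      also have "\<dots> = (\<Sum>e\<in>UNIV. pd b' (Gv e) x * k e x + Gv e x * pd b' (k e) x)"
        by (rule sum.cong[OF refl]) (rule pd_mult[OF dGv dk])
      finally have pD2: "pd b' D2 x = (\<Sum>c\<in>UNIV. pd b' (pd c (k c)) x) + (\<Sum>e\<in>UNIV. pd b' (Gv e) x * k e x) + (\<Sum>e\<in>UNIV. Gv e x * pd b' (k e) x)"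
        by (simp add: sum.distrib)
      have "(\<Sum>e\<in>UNIV. k e x * pd e (Gv b') x) = (\<Sum>e\<in>UNIV. pd b' (Gv e) x * k e x)"
        by (rule sum.cong[OF refl]) (subst curl, rule mult.commute)
      then show ?thesis using pD pD2 unfolding SS_def by linarith
    qed
    have c2: "(\<Sum>d\<in>UNIV. \<Sum>e\<in>UNIV. k e x * pd e (G d b' d) x) = (\<Sum>e\<in>UNIV. k e x * pd e (Gv b') x)" for b'
    proof -
      have "(\<Sum>e\<in>UNIV. k e x * pd e (Gv b') x) = (\<Sum>e\<in>UNIV. k e x * (\<Sum>d\<in>UNIV. pd e (G d b' d) x))"
        unfolding Gv_def by (rule sum.cong[OF refl]) (simp add: pd_sum dG)
      also have "\<dots> = (\<Sum>e\<in>UNIV. \<Sum>d\<in>UNIV. k e x * pd e (G d b' d) x)"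
        by (simp add: sum_distrib_left)
      also have "\<dots> = (\<Sum>d\<in>UNIV. \<Sum>e\<in>UNIV. k e x * pd e (G d b' d) x)" by (rule sum.swap)
      finally show ?thesis by simp
    qed
    have c3: "(\<Sum>d\<in>UNIV. \<Sum>e\<in>UNIV. G d e d x * pd b' (k e) x) = (\<Sum>e\<in>UNIV. Gv e x * pd b' (k e) x)" for b'
      unfolding Gv_def sum_distrib_right by (rule sum.swap)
    have S3: "(\<Sum>d\<in>UNIV. lie_conn G k d b' d x) = SS b'" for b'
    proof -
      have c1: "(\<Sum>d\<in>UNIV. \<Sum>e\<in>UNIV. G e b' d x * pd e (k d) x) = (\<Sum>d\<in>UNIV. \<Sum>e\<in>UNIV. G d b' e x * pd d (k e) x)"
        by (rule sum.swap)
      have "(\<Sum>d\<in>UNIV. lie_conn G k d b' d x) = (\<Sum>d\<in>UNIV. pd b' (pd d (k d)) x) + (\<Sum>d\<in>UNIV. \<Sum>e\<in>UNIV. k e x * pd e (G d b' d) x)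
         - (\<Sum>d\<in>UNIV. \<Sum>e\<in>UNIV. G e b' d x * pd e (k d) x) + (\<Sum>d\<in>UNIV. \<Sum>e\<in>UNIV. G d e d x * pd b' (k e) x)
         + (\<Sum>d\<in>UNIV. \<Sum>e\<in>UNIV. G d b' e x * pd d (k e) x)"
        unfolding lie_conn_def by (simp only: sum.distrib sum_subtractf)
      then show ?thesis using c1 c2[of b'] c3[of b'] unfolding SS_def by linarith
    qed
    have T4: "(\<Sum>a\<in>UNIV. lie_conn G k a a c' x) = SS c'" for c'
    proof -
      have t1: "(\<Sum>a\<in>UNIV. pd a (pd c' (k a)) x) = (\<Sum>d\<in>UNIV. pd c' (pd d (k d)) x)"
        by (rule sum.cong[OF refl]) (rule kcl)
      have t2: "(\<Sum>a\<in>UNIV. \<Sum>d\<in>UNIV. k d x * pd d (G a a c') x) = (\<Sum>a\<in>UNIV. \<Sum>d\<in>UNIV. k d x * pd d (G a c' a) x)"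
      proof (rule sum.cong[OF refl], rule sum.cong[OF refl])
        fix a d
        have "pd d (G a a c') x = pd d (G a c' a) x"
          by (rule pd_local[OF U x dG]) (simp add: Gsym)
        then show "k d x * pd d (G a a c') x = k d x * pd d (G a c' a) x" by simp
      qed
      have t3: "(\<Sum>a\<in>UNIV. \<Sum>d\<in>UNIV. G d a c' x * pd d (k a) x) = (\<Sum>a\<in>UNIV. \<Sum>d\<in>UNIV. G a d c' x * pd a (k d) x)"
        by (rule sum.swap)
      have t5: "(\<Sum>a\<in>UNIV. \<Sum>d\<in>UNIV. G a a d x * pd c' (k d) x) = (\<Sum>a\<in>UNIV. \<Sum>d\<in>UNIV. G a d a x * pd c' (k d) x)"
        by (rule sum.cong[OF refl], rule sum.cong[OF refl]) (subst Gsym[OF x], rule refl)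
      have "(\<Sum>a\<in>UNIV. lie_conn G k a a c' x) = (\<Sum>a\<in>UNIV. pd a (pd c' (k a)) x) + (\<Sum>a\<in>UNIV. \<Sum>d\<in>UNIV. k d x * pd d (G a a c') x)
         - (\<Sum>a\<in>UNIV. \<Sum>d\<in>UNIV. G d a c' x * pd d (k a) x) + (\<Sum>a\<in>UNIV. \<Sum>d\<in>UNIV. G a d c' x * pd a (k d) x)
         + (\<Sum>a\<in>UNIV. \<Sum>d\<in>UNIV. G a a d x * pd c' (k d) x)"
        unfolding lie_conn_def by (simp only: sum.distrib sum_subtractf)
      then show ?thesis using t1 t2 t3 t5 c2[of c'] c3[of c'] unfolding SS_def by linarith
    qed
    have "tracefree_part (lie_conn G k) a b c x = 0" using tfz x by blast
    then show "lie_conn G k a b c x = 0"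
      unfolding tracefree_part_def using S3[of b] T4[of c] SS0[of b] SS0[of c] by simp
  qed
qed

end
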